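(* Let $k$ be a constant and let $D$ be the derivation (linear, satisfying the Leibniz rule, killing constants) on polynomials in the commuting variables $I,x,y,u$ determined by $D(I)=I(y+u)$, $D(x)=2kxy$, $D(y)=2kxy$, $D(u)=2kxy$. Then for $n\ge1$, $$D^n(I)=I\sum_{w\in B_n}x^{\mathrm{exc}(w)}y^{\mathrm{aexc}(w)}u^{\mathrm{fix}(w)}k^{n-\mathrm{cyc}(w)}.$$
   Context: $B_n$ is the hyperoctahedral group of signed permutations $w$ of $\pm[n]$ with $w(-i)=-w(i)$, written in standard cycle decomposition (each cycle starts with its element of largest absolute value, cycles ordered by increasing absolute value of first elements); $\mathrm{cyc}(w)$ is the number of cycles. For $i\in[n]$: $i$ is an excedance if $w(|w(i)|)>w(i)$; an anti-excedance if $w(i)=-i$ or $w(|w(i)|)<w(i)$; a fixed point if $w(i)=i$. $\mathrm{exc}(w)$, $\mathrm{aexc}(w)$, $\mathrm{fix}(w)$ denote their numbers. *)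

theory Defs
  imports Main "HOL-Library.Poly_Mapping"
begin

datatype var = VI | VX | VY | VU

(* Polynomials in I,x,y,u with coefficients in a commutative ring 'a (containing the constant k):
   finitely supported maps from monomials (exponent vectors) to coefficients. *)
type_synonym 'a mpoly4 = "(var \<Rightarrow>\<^sub>0 nat) \<Rightarrow>\<^sub>0 'a"

definition Var :: "var \<Rightarrow> 'a::comm_ring_1 mpoly4" where
  "Var v = Poly_Mapping.single (Poly_Mapping.single v 1) 1"

definition Const :: "'a::comm_ring_1 \<Rightarrow> 'a mpoly4" where
  "Const c = Poly_Mapping.single 0 c"

definition is_derivation :: "('a::comm_ring_1 mpoly4 \<Rightarrow> 'a mpoly4) \<Rightarrow> bool" where
  "is_derivation D \<longleftrightarrow>
     (\<forall>p q. D (p + q) = D p + D q) \<and>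
     (\<forall>p q. D (p * q) = D p * q + p * D q) \<and>
     (\<forall>c. D (Const c) = 0)"

definition signed_perms :: "nat \<Rightarrow> (int \<Rightarrow> int) set" where
  "signed_perms n = {w. bij_betw w ({- int n..int n} - {0}) ({- int n..int n} - {0})
                      \<and> (\<forall>i. w (- i) = - w i)
                      \<and> (\<forall>i. i \<notin> {- int n..int n} \<longrightarrow> w i = i)}"

definition exc :: "nat \<Rightarrow> (int \<Rightarrow> int) \<Rightarrow> nat" where
  "exc n w = card {i \<in> {1..int n}. w \<bar>w i\<bar> > w i}"

definition aexc :: "nat \<Rightarrow> (int \<Rightarrow> int) \<Rightarrow> nat" where
  "aexc n w = card {i \<in> {1..int n}. w i = - i \<or> w \<bar>w i\<bar> < w i}"

definition fixpts :: "nat \<Rightarrow> (int \<Rightarrow> int) \<Rightarrow> nat" where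
  "fixpts n w = card {i \<in> {1..int n}. w i = i}"

(* Cycles of the standard cycle decomposition: the cycles of i \<mapsto> |w(i)| on [n] *)
definition cyc :: "nat \<Rightarrow> (int \<Rightarrow> int) \<Rightarrow> nat" where
  "cyc n w = card ((\<lambda>i. {((\<lambda>j. \<bar>w j\<bar>) ^^ m) i | m. True}) ` {1..int n})"

end

theory Submission
  imports Defs "HOL-Library.FuncSet"
begin


definition orb :: "('b \<Rightarrow> 'b) \<Rightarrow> 'b \<Rightarrow> 'b set" where
  "orb f x = {(f ^^ m) x | m. True}"

lemma orbI: "y = (f ^^ m) x \<Longrightarrow> y \<in> orb f x"
  unfolding orb_def by blast

lemma orbE: "y \<in> orb f x \<Longrightarrow> (\<And>m. y = (f ^^ m) x \<Longrightarrow> P) \<Longrightarrow> P"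
  unfolding orb_def by blast

lemma orb_step: "orb f x = insert x (orb f (f x))"
proof -
  have "orb f x \<subseteq> insert x (orb f (f x))"
  proof
    fix y assume "y \<in> orb f x"
    then obtain m where y: "y = (f ^^ m) x" by (auto simp: orb_def)
    show "y \<in> insert x (orb f (f x))"
    proof (cases m)
      case 0 then show ?thesis using y by simp
    next
      case (Suc m')
      then have "y = (f ^^ m') (f x)" using y by (simp add: funpow_Suc_right del: funpow.simps)
      then show ?thesis unfolding orb_def by blast
    qed
  qed
  moreover have "insert x (orb f (f x)) \<subseteq> orb f x"
  proof
    fix y assume "y \<in> insert x (orb f (f x))"
    then show "y \<in> orb f x"
    proof
      assume "y = x" then show ?thesis unfolding orb_def by (auto intro: exI[of _ 0])
    next
      assume "y \<in> orb f (f x)"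
      then obtain m where "y = (f ^^ m) (f x)" by (auto simp: orb_def)
      then have "y = (f ^^ Suc m) x" by (simp add: funpow_Suc_right del: funpow.simps)
      then show ?thesis unfolding orb_def by blast
    qed
  qed
  ultimately show ?thesis by blast
qed

lemma orb_self: "x \<in> orb f x"
  by (subst orb_step) simp

lemma funpow_in: "\<forall>x\<in>A. f x \<in> A \<Longrightarrow> x \<in> A \<Longrightarrow> (f ^^ m) x \<in> A"
proof (induction m)
  case (Suc m)
  then have "(f ^^ m) x \<in> A" by blast
  then show ?case using Suc.prems(1) by simp
qed simp

lemma orb_subset:
  assumes "\<forall>x\<in>A. f x \<in> A" "x \<in> A" shows "orb f x \<subseteq> A"
proof
  fix y assume "y \<in> orb f x"
  then obtain m where "y = (f ^^ m) x" unfolding orb_def by blast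
  then show "y \<in> A" using funpow_in[OF assms] by simp
qed

lemma funpow_agree: "\<forall>x\<in>A. f x \<in> A \<Longrightarrow> \<forall>x\<in>A. g x = f x \<Longrightarrow> x \<in> A \<Longrightarrow> (g ^^ m) x = (f ^^ m) x"
proof (induction m)
  case (Suc m)
  have "(f ^^ m) x \<in> A" using funpow_in[of A f x m] Suc.prems by blast
  then show ?case using Suc by simp
qed simp

lemma orb_agree: "\<forall>x\<in>A. f x \<in> A \<Longrightarrow> \<forall>x\<in>A. g x = f x \<Longrightarrow> x \<in> A \<Longrightarrow> orb g x = orb f x"
proof -
  assume a: "\<forall>x\<in>A. f x \<in> A" "\<forall>x\<in>A. g x = f x" "x \<in> A"
  have "\<And>m. (g ^^ m) x = (f ^^ m) x" using funpow_agree[OF a] .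
  then show ?thesis unfolding orb_def by simp
qed

lemma inj_on_funpow': "inj_on f A \<Longrightarrow> \<forall>x\<in>A. f x \<in> A \<Longrightarrow> inj_on (f ^^ m) A"
proof (induction m)
  case 0 then show ?case by simp
next
  case (Suc m)
  have "(f ^^ m) ` A \<subseteq> A" using funpow_in[OF Suc.prems(2)] by blast
  then have "inj_on f ((f ^^ m) ` A)" using Suc.prems(1) inj_on_subset by blast
  then have "inj_on (f \<circ> (f ^^ m)) A" using Suc.IH Suc.prems comp_inj_on by blast
  then show ?case by (simp add: comp_def)
qed

lemma periodic:
  assumes fin: "finite A" and inj: "inj_on f A" and maps: "\<forall>x\<in>A. f x \<in> A" and x: "x \<in> A"
  shows "\<exists>m>0. (f ^^ m) x = x"
proof -
  let ?h = "\<lambda>m. (f ^^ m) x"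
  have "\<not> inj_on ?h {..card A}"
  proof
    assume "inj_on ?h {..card A}"
    moreover have "?h ` {..card A} \<subseteq> A" using funpow_in[OF maps x] by auto
    ultimately have "card {..card A} \<le> card A" using card_inj_on_le fin by blast
    then show False by simp
  qed
  then obtain a0 b0 where ab0: "a0 \<noteq> b0" "?h a0 = ?h b0"
    unfolding inj_on_def by blast
  have "\<exists>a b. a < b \<and> ?h a = ?h b"
  proof (cases "a0 < b0")
    case True then show ?thesis using ab0 by blast
  next
    case False then have "b0 < a0" using ab0(1) by simp
    then show ?thesis using ab0(2) by (intro exI[of _ b0] exI[of _ a0]) simp
  qed
  then obtain a b where ab: "a < b" "?h a = ?h b" by blast
  have "(f ^^ b) x = (f ^^ a) ((f ^^ (b - a)) x)"
    using ab(1) funpow_add[of a "b - a" f] by (simp add: o_def)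
  then have "(f ^^ a) ((f ^^ (b - a)) x) = (f ^^ a) x" using ab(2) by simp
  moreover have "(f ^^ (b - a)) x \<in> A" using funpow_in[OF maps x] .
  ultimately have "(f ^^ (b - a)) x = x"
    using inj_onD[OF inj_on_funpow'[OF inj maps, of a]] x by blast
  moreover have "b - a > 0" using ab(1) by simp
  ultimately show ?thesis by blast
qed

lemma in_orb_next:
  assumes "finite A" "inj_on f A" "\<forall>x\<in>A. f x \<in> A" "x \<in> A"
  shows "x \<in> orb f (f x)"
proof -
  obtain m where m: "m > 0" "(f ^^ m) x = x" using periodic[OF assms] by blast
  then obtain m' where m': "m = Suc m'" using gr0_conv_Suc by blast
  have "(f ^^ m) x = (f ^^ m') (f x)" unfolding m' by (simp add: funpow_Suc_right del: funpow.simps)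
  then have "x = (f ^^ m') (f x)" using m by simp
  then show ?thesis unfolding orb_def by blast
qed

lemma orb_splice:
  assumes maps: "\<forall>x\<in>A. f x \<in> A" and N: "N \<notin> A" and q: "q \<in> A" and gq: "g q = N"
    and gN: "g N = f q" and agree: "\<forall>x\<in>A-{q}. g x = f x" and i: "i \<in> A"
  shows "orb g i = orb f i \<union> (if q \<in> orb f i then {N} else {})"
proof -
  have fwd: "\<exists>m. (g ^^ m') i = (f ^^ m) i \<or> ((g ^^ m') i = N \<and> (f ^^ m) i = q)" for m'
  proof (induction m')
    case 0 then show ?case by (intro exI[of _ 0]) simp
  next
    case (Suc m')
    then obtain m where m: "(g ^^ m') i = (f ^^ m) i \<or> ((g ^^ m') i = N \<and> (f ^^ m) i = q)" by blast
    have inA: "(f ^^ m) i \<in> A" using funpow_in[OF maps i] .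
    show ?case
    proof (cases "(g ^^ m') i = (f ^^ m) i")
      case True
      show ?thesis
      proof (cases "(f ^^ m) i = q")
        case True
        then show ?thesis using \<open>(g ^^ m') i = (f ^^ m) i\<close> gq by (intro exI[of _ m]) simp
      next
        case False
        then show ?thesis using \<open>(g ^^ m') i = (f ^^ m) i\<close> agree inA by (intro exI[of _ "Suc m"]) simp
      qed
    next
      case False
      then have "(g ^^ m') i = N" "(f ^^ m) i = q" using m by auto
      then show ?thesis using gN by (intro exI[of _ "Suc m"]) simp
    qed
  qed
  have bwd: "\<exists>m'. (g ^^ m') i = (f ^^ m) i" for m
  proof (induction m)
    case 0 then show ?case by (intro exI[of _ 0]) simp
  next
    case (Suc m)
    then obtain m' where m': "(g ^^ m') i = (f ^^ m) i" by blast
    have inA: "(f ^^ m) i \<in> A" using funpow_in[OF maps i] .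
    show ?case
    proof (cases "(f ^^ m) i = q")
      case True
      then show ?thesis using m' gq gN by (intro exI[of _ "Suc (Suc m')"]) simp
    next
      case False
      then show ?thesis using m' agree inA by (intro exI[of _ "Suc m'"]) simp
    qed
  qed
  have Nin: "N \<in> orb g i" if qin: "q \<in> orb f i"
  proof -
    obtain m where m: "q = (f ^^ m) i" using qin by (rule orbE)
    obtain m' where m': "(g ^^ m') i = (f ^^ m) i" using bwd by blast
    have "(g ^^ Suc m') i = N" using gq m m' by simp
    then show ?thesis by (intro orbI[where m="Suc m'"]) simp
  qed
  show ?thesis
  proof (intro equalityI subsetI)
    fix y assume "y \<in> orb g i"
    then obtain m' where y: "y = (g ^^ m') i" by (rule orbE)
    obtain m where m: "(g ^^ m') i = (f ^^ m) i \<or> ((g ^^ m') i = N \<and> (f ^^ m) i = q)" using fwd by blast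
    show "y \<in> orb f i \<union> (if q \<in> orb f i then {N} else {})"
    proof (cases "(g ^^ m') i = (f ^^ m) i")
      case True
      then have "y \<in> orb f i" using y by (intro orbI[where m=m]) simp
      then show ?thesis by simp
    next
      case False
      then have "y = N" "q \<in> orb f i" using m y by (auto intro: orbI[where m=m])
      then show ?thesis by simp
    qed
  next
    fix y assume "y \<in> orb f i \<union> (if q \<in> orb f i then {N} else {})"
    then show "y \<in> orb g i"
    proof
      assume "y \<in> orb f i"
      then obtain m where m: "y = (f ^^ m) i" by (rule orbE)
      obtain m' where m': "(g ^^ m') i = (f ^^ m) i" using bwd by blast
      show ?thesis using m m' by (intro orbI[where m=m']) simp
    next
      assume "y \<in> (if q \<in> orb f i then {N} else {})"
      then have "y = N" "q \<in> orb f i" by (auto split: if_splits)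
      then show ?thesis using Nin by simp
    qed
  qed
qed

lemma card_orb_splice:
  assumes fin: "finite A" and inj: "inj_on f A" and maps: "\<forall>x\<in>A. f x \<in> A" and N: "N \<notin> A"
    and q: "q \<in> A" and gq: "g q = N"
    and gN: "g N = f q" and agree: "\<forall>x\<in>A-{q}. g x = f x"
  shows "card (orb g ` insert N A) = card (orb f ` A)"
proof -
  let ?h = "\<lambda>Z. if q \<in> Z then insert N Z else Z"
  have sp: "orb g i = ?h (orb f i)" if "i \<in> A" for i
    using orb_splice[OF maps N q gq gN agree that] by auto
  have fq: "f q \<in> A" using maps q by blast
  have o1: "orb g N = insert N (orb g (f q))" using orb_step[of g N] gN by simp
  have o2: "orb g (f q) = insert N (orb f (f q))"
    using sp[OF fq] in_orb_next[OF fin inj maps q] by simp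
  have "orb g N = orb g (f q)" using o1 o2 by simp
  then have "orb g ` insert N A = orb g ` A" using fq by auto
  also have "\<dots> = ?h ` (orb f ` A)" using sp by (auto simp: image_image)
  finally have eq: "orb g ` insert N A = ?h ` (orb f ` A)" .
  have "inj_on ?h (orb f ` A)"
  proof (rule inj_onI)
    fix Z1 Z2 assume "Z1 \<in> orb f ` A" "Z2 \<in> orb f ` A" "?h Z1 = ?h Z2"
    moreover have "N \<notin> Z1" "N \<notin> Z2" using calculation orb_subset[OF maps] N by blast+
    ultimately show "Z1 = Z2" by (auto split: if_splits)
  qed
  then show ?thesis using eq card_image by metis
qed

lemma card_orb_ext:
  assumes fin: "finite A" and maps: "\<forall>x\<in>A. f x \<in> A" and N: "N \<notin> A"
    and gN: "g N = N" and agree: "\<forall>x\<in>A. g x = f x"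
  shows "card (orb g ` insert N A) = Suc (card (orb f ` A))"
proof -
  have "(g ^^ m) N = N" for m by (induction m) (simp_all add: gN)
  then have oN: "orb g N = {N}" unfolding orb_def by auto
  have "orb g ` A = orb f ` A" using orb_agree[OF maps agree] by auto
  then have eq: "orb g ` insert N A = insert {N} (orb f ` A)" using oN by auto
  have "{N} \<notin> orb f ` A"
  proof
    assume "{N} \<in> orb f ` A"
    then obtain x where "x \<in> A" "{N} = orb f x" by blast
    then show False using orb_self[of x f] N by auto
  qed
  then show ?thesis using eq fin by simp
qed



abbreviation SS :: "nat \<Rightarrow> int set" where "SS n \<equiv> {- int n..int n} - {0}"

lemma sp_iff:
  "w \<in> signed_perms n \<longleftrightarrow> inj_on w (SS n) \<and> (\<forall>i\<in>SS n. w i \<in> SS n) \<and> (\<forall>i. w (-i) = - w i)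
     \<and> (\<forall>i. i \<notin> {- int n..int n} \<longrightarrow> w i = i)"
proof
  assume "w \<in> signed_perms n"
  then show "inj_on w (SS n) \<and> (\<forall>i\<in>SS n. w i \<in> SS n) \<and> (\<forall>i. w (-i) = - w i)
     \<and> (\<forall>i. i \<notin> {- int n..int n} \<longrightarrow> w i = i)"
    unfolding signed_perms_def bij_betw_def by blast
next
  assume a: "inj_on w (SS n) \<and> (\<forall>i\<in>SS n. w i \<in> SS n) \<and> (\<forall>i. w (-i) = - w i)
     \<and> (\<forall>i. i \<notin> {- int n..int n} \<longrightarrow> w i = i)"
  then have "w ` SS n \<subseteq> SS n" unfolding image_subset_iff by blast
  then have "w ` SS n = SS n" using endo_inj_surj[of "SS n" w] a by simp
  then show "w \<in> signed_perms n" using a unfolding signed_perms_def bij_betw_def by blast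
qed

lemma spD:
  assumes "w \<in> signed_perms n"
  shows "inj_on w (SS n)" "\<And>i. i \<in> SS n \<Longrightarrow> w i \<in> SS n" "\<And>i. w (-i) = - w i"
    "\<And>i. i \<notin> {- int n..int n} \<Longrightarrow> w i = i"
  using assms unfolding sp_iff by blast+

lemma sp_zero: "w \<in> signed_perms n \<Longrightarrow> w 0 = 0"
proof -
  assume "w \<in> signed_perms n"
  from spD(3)[OF this, of 0] have "w 0 = - w 0" by simp
  then show "w 0 = 0" by simp
qed

lemma sp_range: "w \<in> signed_perms n \<Longrightarrow> i \<in> SS n \<Longrightarrow> w i \<noteq> 0 \<and> \<bar>w i\<bar> \<le> int n"
proof -
  assume "w \<in> signed_perms n" "i \<in> SS n"
  from spD(2)[OF this] show ?thesis by (simp, arith)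
qed

lemma sp_inj: "w \<in> signed_perms n \<Longrightarrow> i \<in> SS n \<Longrightarrow> j \<in> SS n \<Longrightarrow> w i = w j \<Longrightarrow> i = j"
proof -
  assume a: "w \<in> signed_perms n" "i \<in> SS n" "j \<in> SS n" "w i = w j"
  show "i = j" using inj_onD[OF spD(1)[OF a(1)] a(4) a(2) a(3)] .
qed

lemma sp_abs_range: "w \<in> signed_perms n \<Longrightarrow> i \<in> {1..int n} \<Longrightarrow> \<bar>w i\<bar> \<in> {1..int n}"
proof -
  assume a: "w \<in> signed_perms n" "i \<in> {1..int n}"
  then have "i \<in> SS n" by simp
  from sp_range[OF a(1) this] show ?thesis by (simp, arith)
qed

lemma sp_abs_inj:
  assumes w: "w \<in> signed_perms n" and i: "i \<in> {1..int n}" and j: "j \<in> {1..int n}"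
    and e: "\<bar>w i\<bar> = \<bar>w j\<bar>"
  shows "i = j"
proof (cases "w i = w j")
  case True then show ?thesis using sp_inj[OF w] i j by auto
next
  case False
  then have "w i = w (- j)" using e spD(3)[OF w, of j] by auto
  then have "i = - j" using sp_inj[OF w, of i "-j"] i j by auto
  then show ?thesis using i j by auto
qed

lemma SS_Suc: "SS (Suc n) = insert (int n + 1) (insert (- int n - 1) (SS n))"
  by auto

definition ext :: "nat \<Rightarrow> (int \<Rightarrow> int) \<Rightarrow> int \<Rightarrow> int \<Rightarrow> int" where
  "ext n w s = w(int n + 1 := s * (int n + 1), - int n - 1 := - (s * (int n + 1)))"

definition unext :: "nat \<Rightarrow> (int \<Rightarrow> int) \<Rightarrow> int \<Rightarrow> int" where
  "unext n w = w(int n + 1 := int n + 1, - int n - 1 := - int n - 1)"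

lemma ext_mem:
  assumes w: "w \<in> signed_perms n" and s: "s \<in> {1, -1}"
  shows "ext n w s \<in> signed_perms (Suc n)"
proof -
  let ?N = "int n + 1"
  have r: "\<And>i. i \<in> SS n \<Longrightarrow> w i \<noteq> 0 \<and> \<bar>w i\<bar> \<le> int n" using sp_range[OF w] by blast
  have inj: "inj_on (ext n w s) (SS (Suc n))"
  proof (rule inj_onI)
    fix i j assume i: "i \<in> SS (Suc n)" and j: "j \<in> SS (Suc n)" and e: "ext n w s i = ext n w s j"
    show "i = j"
    proof (cases "i \<in> SS n")
      case True
      note iT = True
      show ?thesis
      proof (cases "j \<in> SS n")
        case True
        then show ?thesis using iT e sp_inj[OF w, of i j] by (auto simp: ext_def)
      next
        case False
        then have "j = ?N \<or> j = - ?N" using j by auto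
        then show ?thesis using iT e r[OF iT] s by (auto simp: ext_def)
      qed
    next
      case False
      then have iN: "i = ?N \<or> i = - ?N" using i by auto
      show ?thesis
      proof (cases "j \<in> SS n")
        case True
        then show ?thesis using iN e r[OF True] s by (auto simp: ext_def)
      next
        case False
        then have "j = ?N \<or> j = - ?N" using j by auto
        then show ?thesis using iN e s by (auto simp: ext_def)
      qed
    qed
  qed
  have maps: "\<forall>i\<in>SS (Suc n). ext n w s i \<in> SS (Suc n)"
  proof
    fix i assume i: "i \<in> SS (Suc n)"
    show "ext n w s i \<in> SS (Suc n)"
    proof (cases "i \<in> SS n")
      case True
      then show ?thesis using r[OF True] by (auto simp: ext_def)
    next
      case False
      then have "i = ?N \<or> i = - ?N" using i by auto
      then show ?thesis using s by (auto simp: ext_def)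
    qed
  qed
  have odd: "\<forall>i. ext n w s (-i) = - ext n w s i"
    using spD(3)[OF w] by (auto simp: ext_def)
  have out: "\<forall>i. i \<notin> {- int (Suc n)..int (Suc n)} \<longrightarrow> ext n w s i = i"
    using spD(4)[OF w] by (auto simp: ext_def)
  show ?thesis unfolding sp_iff using inj maps odd out by blast
qed

lemma unext_mem:
  assumes w: "w \<in> signed_perms (Suc n)" and s: "w (int n + 1) = s * (int n + 1)" "s \<in> {1, -1}"
  shows "unext n w \<in> signed_perms n"
proof -
  let ?N = "int n + 1"
  have wm: "w (- ?N) = - (s * ?N)" using spD(3)[OF w, of ?N] s by simp
  have inj: "inj_on (unext n w) (SS n)"
    using spD(1)[OF w] unfolding unext_def inj_on_def by auto
  have maps: "\<forall>i\<in>SS n. unext n w i \<in> SS n"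
  proof
    fix i assume i: "i \<in> SS n"
    have iS: "i \<in> SS (Suc n)" using i by auto
    have "w i \<in> SS (Suc n)" using spD(2)[OF w iS] .
    moreover have "w i \<noteq> ?N \<and> w i \<noteq> - ?N"
    proof (rule ccontr)
      assume c: "\<not> (w i \<noteq> ?N \<and> w i \<noteq> - ?N)"
      have NS: "?N \<in> SS (Suc n)" "- ?N \<in> SS (Suc n)" by auto
      have "w i = w ?N \<or> w i = w (- ?N)" using c s wm by auto
      then have "i = ?N \<or> i = - ?N" using sp_inj[OF w iS NS(1)] sp_inj[OF w iS NS(2)] by blast
      then show False using i by auto
    qed
    ultimately show "unext n w i \<in> SS n" using i by (auto simp: unext_def)
  qed
  have odd: "\<forall>i. unext n w (-i) = - unext n w i"
    using spD(3)[OF w] by (auto simp: unext_def)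
  have out: "\<forall>i. i \<notin> {- int n..int n} \<longrightarrow> unext n w i = i"
    using spD(4)[OF w] by (auto simp: unext_def)
  show ?thesis unfolding sp_iff using inj maps odd out by blast
qed

lemma ext_bij:
  assumes s: "s \<in> {1, -1}"
  shows "bij_betw (\<lambda>w. ext n w s) (signed_perms n)
           {w \<in> signed_perms (Suc n). w (int n + 1) = s * (int n + 1)}"
proof (rule bij_betw_byWitness[where f' = "unext n"])
  show "\<forall>a\<in>signed_perms n. unext n (ext n a s) = a"
  proof
    fix w assume w: "w \<in> signed_perms n"
    show "unext n (ext n w s) = w"
    proof
      fix i show "unext n (ext n w s) i = w i"
        using spD(4)[OF w, of "int n + 1"] spD(4)[OF w, of "- int n - 1"]
        by (auto simp: unext_def ext_def)
    qed
  qed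
  show "\<forall>a'\<in>{w \<in> signed_perms (Suc n). w (int n + 1) = s * (int n + 1)}. ext n (unext n a') s = a'"
  proof
    fix w assume w: "w \<in> {w \<in> signed_perms (Suc n). w (int n + 1) = s * (int n + 1)}"
    then have "w (- int n - 1) = - (s * (int n + 1))" using spD(3)[of w "Suc n" "int n + 1"] by auto
    then show "ext n (unext n w) s = w" using w by (auto simp: unext_def ext_def)
  qed
  show "(\<lambda>w. ext n w s) ` signed_perms n \<subseteq> {w \<in> signed_perms (Suc n). w (int n + 1) = s * (int n + 1)}"
    using ext_mem[OF _ s] by (auto simp: ext_def)
  show "unext n ` {w \<in> signed_perms (Suc n). w (int n + 1) = s * (int n + 1)} \<subseteq> signed_perms n"
    using unext_mem s by blast
qed


lemma unext_ext: "w \<in> signed_perms n \<Longrightarrow> unext n (ext n w s) = w"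
proof
  fix i assume w: "w \<in> signed_perms n"
  show "unext n (ext n w s) i = w i"
    using spD(4)[OF w, of "int n + 1"] spD(4)[OF w, of "- int n - 1"]
    by (auto simp: unext_def ext_def)
qed

lemma ext_unext: "w \<in> signed_perms (Suc n) \<Longrightarrow> w (int n + 1) = s * (int n + 1) \<Longrightarrow> ext n (unext n w) s = w"
proof -
  assume w: "w \<in> signed_perms (Suc n)" and s: "w (int n + 1) = s * (int n + 1)"
  have m: "w (- int n - 1) = - (s * (int n + 1))" using spD(3)[OF w, of "int n + 1"] s by simp
  show "ext n (unext n w) s = w"
  proof
    fix i show "ext n (unext n w) s i = w i"
      using s m by (simp add: unext_def ext_def)
  qed
qed

lemma comp_mem:
  assumes v: "v \<in> signed_perms m" and w: "w \<in> signed_perms m"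
  shows "v \<circ> w \<in> signed_perms m"
proof -
  have wS: "w ` SS m \<subseteq> SS m" by (rule image_subsetI, rule spD(2)[OF w])
  have inj: "inj_on (v \<circ> w) (SS m)"
    using comp_inj_on[OF spD(1)[OF w] inj_on_subset[OF spD(1)[OF v] wS]] .
  have maps: "\<forall>i\<in>SS m. (v \<circ> w) i \<in> SS m"
  proof
    fix i assume "i \<in> SS m"
    then have "w i \<in> SS m" by (rule spD(2)[OF w])
    then have "v (w i) \<in> SS m" by (rule spD(2)[OF v])
    then show "(v \<circ> w) i \<in> SS m" by simp
  qed
  have odd: "\<forall>i. (v \<circ> w) (-i) = - (v \<circ> w) i"
  proof
    fix i show "(v \<circ> w) (-i) = - (v \<circ> w) i" by (simp add: spD(3)[OF w] spD(3)[OF v])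
  qed
  have out: "\<forall>i. i \<notin> {- int m..int m} \<longrightarrow> (v \<circ> w) i = i"
  proof (intro allI impI)
    fix i assume "i \<notin> {- int m..int m}"
    then show "(v \<circ> w) i = i" by (simp add: spD(4)[OF w] spD(4)[OF v])
  qed
  show ?thesis unfolding sp_iff using inj maps odd out by blast
qed

definition tr :: "nat \<Rightarrow> int \<Rightarrow> int \<Rightarrow> int \<Rightarrow> int" where
  "tr n q d = id(q := d * (int n + 1), - q := - (d * (int n + 1)), int n + 1 := q, - int n - 1 := - q)"

definition tinv :: "nat \<Rightarrow> int \<Rightarrow> int \<Rightarrow> int \<Rightarrow> int" where
  "tinv n q d = id(d * (int n + 1) := q, - (d * (int n + 1)) := - q, q := int n + 1, - q := - int n - 1)"

lemma tr_tinv: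
  assumes q: "q \<in> {1..int n}" and d: "d \<in> {1, -1}"
  shows "tr n q d (tinv n q d i) = i" "tinv n q d (tr n q d i) = i"
  using q d by (auto simp: tr_def tinv_def)

lemma tr_mem:
  assumes q: "q \<in> {1..int n}" and d: "d \<in> {1, -1}"
  shows "tr n q d \<in> signed_perms (Suc n)"
proof -
  have inj: "inj_on (tr n q d) (SS (Suc n))"
  proof (rule inj_onI)
    fix i j assume "tr n q d i = tr n q d j"
    then have "tinv n q d (tr n q d i) = tinv n q d (tr n q d j)" by simp
    then show "i = j" using tr_tinv[OF q d] by simp
  qed
  have maps: "\<forall>i\<in>SS (Suc n). tr n q d i \<in> SS (Suc n)" using q d by (auto simp: tr_def)
  have odd: "\<forall>i. tr n q d (-i) = - tr n q d i" using q d by (auto simp: tr_def)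
  have out: "\<forall>i. i \<notin> {- int (Suc n)..int (Suc n)} \<longrightarrow> tr n q d i = i" using q d by (auto simp: tr_def)
  show ?thesis unfolding sp_iff using inj maps odd out by blast
qed

lemma tinv_mem:
  assumes q: "q \<in> {1..int n}" and d: "d \<in> {1, -1}"
  shows "tinv n q d \<in> signed_perms (Suc n)"
proof -
  have inj: "inj_on (tinv n q d) (SS (Suc n))"
  proof (rule inj_onI)
    fix i j assume "tinv n q d i = tinv n q d j"
    then have "tr n q d (tinv n q d i) = tr n q d (tinv n q d j)" by simp
    then show "i = j" using tr_tinv[OF q d] by simp
  qed
  have maps: "\<forall>i\<in>SS (Suc n). tinv n q d i \<in> SS (Suc n)" using q d by (auto simp: tinv_def)
  have odd: "\<forall>i. tinv n q d (-i) = - tinv n q d i" using q d by (auto simp: tinv_def)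
  have out: "\<forall>i. i \<notin> {- int (Suc n)..int (Suc n)} \<longrightarrow> tinv n q d i = i" using q d by (auto simp: tinv_def)
  show ?thesis unfolding sp_iff using inj maps odd out by blast
qed


definition ins :: "nat \<Rightarrow> (int \<Rightarrow> int) \<Rightarrow> int \<Rightarrow> int \<Rightarrow> int \<Rightarrow> int" where
  "ins n w q d = ext n w 1 \<circ> tr n q d"

lemma ins_apply:
  assumes w: "w \<in> signed_perms n" and q: "q \<in> {1..int n}" and d: "d \<in> {1, -1}"
  shows "ins n w q d i = (if i = q then d * (int n + 1) else if i = - q then - (d * (int n + 1))
     else if i = int n + 1 then w q else if i = - int n - 1 then - w q else w i)"
proof -
  have wq: "w (- q) = - w q" using spD(3)[OF w] .
  show ?thesis using q d wq by (auto simp: ins_def ext_def tr_def)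
qed

lemma ins_mem:
  assumes w: "w \<in> signed_perms n" and q: "q \<in> {1..int n}" and d: "d \<in> {1, -1}"
  shows "ins n w q d \<in> signed_perms (Suc n)"
  unfolding ins_def by (rule comp_mem[OF ext_mem[OF w] tr_mem[OF q d]]) simp

definition qf :: "nat \<Rightarrow> (int \<Rightarrow> int) \<Rightarrow> int" where
  "qf n w = (SOME q. q \<in> {1..int n} \<and> \<bar>w q\<bar> = int n + 1)"

definition df :: "nat \<Rightarrow> (int \<Rightarrow> int) \<Rightarrow> int" where
  "df n w = (if w (qf n w) = int n + 1 then 1 else -1)"

definition unins :: "nat \<Rightarrow> (int \<Rightarrow> int) \<Rightarrow> (int \<Rightarrow> int) \<times> int \<times> int" where
  "unins n w = (unext n (w \<circ> tinv n (qf n w) (df n w)), qf n w, df n w)"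

abbreviation Ins :: "nat \<Rightarrow> (int \<Rightarrow> int) set" where
  "Ins n \<equiv> {w \<in> signed_perms (Suc n). w (int n + 1) \<noteq> int n + 1 \<and> w (int n + 1) \<noteq> - (int n + 1)}"

lemma qf_ins:
  assumes w: "w \<in> signed_perms n" and q: "q \<in> {1..int n}" and d: "d \<in> {1, -1}"
  shows "qf n (ins n w q d) = q"
  unfolding qf_def
proof (rule some_equality)
  show "q \<in> {1..int n} \<and> \<bar>ins n w q d q\<bar> = int n + 1"
    using q d ins_apply[OF w q d, of q] by auto
next
  fix p assume p: "p \<in> {1..int n} \<and> \<bar>ins n w q d p\<bar> = int n + 1"
  show "p = q"
  proof (rule ccontr)
    assume "p \<noteq> q"
    then have "ins n w q d p = w p" using p q ins_apply[OF w q d, of p] by auto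
    moreover have "\<bar>w p\<bar> \<in> {1..int n}" using sp_abs_range[OF w] p by blast
    ultimately show False using p by simp
  qed
qed

lemma qf_ex:
  assumes w: "w \<in> Ins n"
  shows "qf n w \<in> {1..int n} \<and> \<bar>w (qf n w)\<bar> = int n + 1"
proof -
  let ?N = "int n + 1"
  have ws: "w \<in> signed_perms (Suc n)" using w by simp
  have "w ` SS (Suc n) = SS (Suc n)" using ws unfolding signed_perms_def bij_betw_def by simp
  moreover have "?N \<in> SS (Suc n)" by simp
  ultimately obtain i where i: "i \<in> SS (Suc n)" "w i = ?N" by (metis imageE)
  have "i \<noteq> ?N" using i w by auto
  moreover have "i \<noteq> - ?N" using i w spD(3)[OF ws, of ?N] by auto
  ultimately have "\<bar>i\<bar> \<in> {1..int n}" using i(1) by auto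
  moreover have "\<bar>w \<bar>i\<bar>\<bar> = ?N" using i spD(3)[OF ws, of i] by (cases "i \<ge> 0") auto
  ultimately have "\<exists>q. q \<in> {1..int n} \<and> \<bar>w q\<bar> = ?N" by blast
  then show ?thesis unfolding qf_def by (rule someI_ex)
qed

lemma ins_bij:
  "bij_betw (\<lambda>(w, q, d). ins n w q d) (signed_perms n \<times> {1..int n} \<times> {1, -1}) (Ins n)"
proof (rule bij_betw_byWitness[where f' = "unins n"])
  show "\<forall>a\<in>signed_perms n \<times> {1..int n} \<times> {1, -1}. unins n ((\<lambda>(w, q, d). ins n w q d) a) = a"
  proof
    fix a :: "(int \<Rightarrow> int) \<times> int \<times> int" assume "a \<in> signed_perms n \<times> {1..int n} \<times> {1, -1}"
    then obtain w q d where a: "a = (w, q, d)" and w: "w \<in> signed_perms n" and q: "q \<in> {1..int n}"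
      and d: "d \<in> {1, -1}" by auto
    have qq: "qf n (ins n w q d) = q" using qf_ins[OF w q d] .
    have dd: "df n (ins n w q d) = d" unfolding df_def qq using ins_apply[OF w q d, of q] d by auto
    have "ins n w q d \<circ> tinv n q d = ext n w 1"
    proof
      fix i show "(ins n w q d \<circ> tinv n q d) i = ext n w 1 i"
        unfolding ins_def using tr_tinv[OF q d] by simp
    qed
    then have "unext n (ins n w q d \<circ> tinv n q d) = w" using unext_ext[OF w] by simp
    then show "unins n ((\<lambda>(w, q, d). ins n w q d) a) = a" unfolding a unins_def using qq dd by simp
  qed
  show "\<forall>a'\<in>Ins n. (\<lambda>(w, q, d). ins n w q d) (unins n a') = a'"
  proof
    fix w assume w: "w \<in> Ins n"
    have ws: "w \<in> signed_perms (Suc n)" using w by simp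
    define q where "q = qf n w"
    define d where "d = df n w"
    have q: "q \<in> {1..int n}" and wq: "\<bar>w q\<bar> = int n + 1" using qf_ex[OF w] unfolding q_def by auto
    have d: "d \<in> {1, -1}" unfolding d_def df_def by simp
    have wqd: "w q = d * (int n + 1)" using wq unfolding d_def df_def q_def[symmetric] by auto
    let ?v = "w \<circ> tinv n q d"
    have vs: "?v \<in> signed_perms (Suc n)" using comp_mem[OF ws tinv_mem[OF q d]] .
    have vN: "?v (int n + 1) = 1 * (int n + 1)"
    proof (cases "d = 1")
      case True
      then show ?thesis using wqd q by (simp add: tinv_def)
    next
      case False
      then have dm: "d = -1" using d by simp
      have "w (- q) = - w q" using spD(3)[OF ws] .
      then show ?thesis using wqd q dm by (simp add: tinv_def)
    qed
    have "ext n (unext n ?v) 1 = ?v" using ext_unext[OF vs vN] .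
    then have "ins n (unext n ?v) q d = ?v \<circ> tr n q d" unfolding ins_def by simp
    also have "\<dots> = w"
    proof
      fix i show "(?v \<circ> tr n q d) i = w i" using tr_tinv[OF q d] by simp
    qed
    finally show "(\<lambda>(w, q, d). ins n w q d) (unins n w) = w" unfolding unins_def q_def[symmetric] d_def[symmetric] by simp
  qed
  show "(\<lambda>(w, q, d). ins n w q d) ` (signed_perms n \<times> {1..int n} \<times> {1, -1}) \<subseteq> Ins n"
  proof (rule image_subsetI)
    fix a :: "(int \<Rightarrow> int) \<times> int \<times> int" assume "a \<in> signed_perms n \<times> {1..int n} \<times> {1, -1}"
    then obtain w q d where a: "a = (w, q, d)" and w: "w \<in> signed_perms n" and q: "q \<in> {1..int n}"
      and d: "d \<in> {1, -1}" by auto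
    have "ins n w q d (int n + 1) = w q" using ins_apply[OF w q d, of "int n + 1"] q by auto
    moreover have "\<bar>w q\<bar> \<in> {1..int n}" using sp_abs_range[OF w q] .
    ultimately have "ins n w q d (int n + 1) \<noteq> int n + 1 \<and> ins n w q d (int n + 1) \<noteq> - (int n + 1)"
      by auto
    then show "(\<lambda>(w, q, d). ins n w q d) a \<in> Ins n" using ins_mem[OF w q d] a by simp
  qed
  show "unins n ` Ins n \<subseteq> signed_perms n \<times> {1..int n} \<times> {1, -1}"
  proof (rule image_subsetI)
    fix w assume w: "w \<in> Ins n"
    have ws: "w \<in> signed_perms (Suc n)" using w by simp
    define q where "q = qf n w"
    define d where "d = df n w"
    have q: "q \<in> {1..int n}" and wq: "\<bar>w q\<bar> = int n + 1" using qf_ex[OF w] unfolding q_def by auto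
    have d: "d \<in> {1, -1}" unfolding d_def df_def by simp
    have wqd: "w q = d * (int n + 1)" using wq unfolding d_def df_def q_def[symmetric] by auto
    let ?v = "w \<circ> tinv n q d"
    have vs: "?v \<in> signed_perms (Suc n)" using comp_mem[OF ws tinv_mem[OF q d]] .
    have vN: "?v (int n + 1) = 1 * (int n + 1)"
    proof (cases "d = 1")
      case True
      then show ?thesis using wqd q by (simp add: tinv_def)
    next
      case False
      then have dm: "d = -1" using d by simp
      have "w (- q) = - w q" using spD(3)[OF ws] .
      then show ?thesis using wqd q dm by (simp add: tinv_def)
    qed
    have "unext n ?v \<in> signed_perms n" using unext_mem[OF vs vN] by (simp del: comp_apply)
    then show "unins n w \<in> signed_perms n \<times> {1..int n} \<times> {1, -1}"
      unfolding unins_def q_def[symmetric] d_def[symmetric] using q d by simp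
  qed
qed



definition st :: "(int \<Rightarrow> int) \<Rightarrow> int \<Rightarrow> nat" where
  "st w i = (if w i = i then 2 else if w \<bar>w i\<bar> > w i then 0 else 1)"

lemma exc_st: "exc n w = card {i \<in> {1..int n}. st w i = 0}"
  unfolding exc_def st_def by (rule arg_cong[where f = card]) auto

lemma fix_st: "fixpts n w = card {i \<in> {1..int n}. st w i = 2}"
  unfolding fixpts_def st_def by (rule arg_cong[where f = card]) auto

lemma aexc_st:
  assumes w: "w \<in> signed_perms n"
  shows "aexc n w = card {i \<in> {1..int n}. st w i = 1}"
  unfolding aexc_def
proof (rule arg_cong[where f = card], rule Collect_cong)
  fix i
  show "(i \<in> {1..int n} \<and> (w i = - i \<or> w \<bar>w i\<bar> < w i)) = (i \<in> {1..int n} \<and> st w i = 1)"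
  proof (cases "i \<in> {1..int n}")
    case True
    have iS: "i \<in> SS n" using True by simp
    have jS: "\<bar>w i\<bar> \<in> SS n" using sp_abs_range[OF w True] by (auto simp: abs_if split: if_splits)
    have "w \<bar>w i\<bar> = w i \<Longrightarrow> w i = i \<or> w i = - i"
    proof -
      assume "w \<bar>w i\<bar> = w i"
      then have "\<bar>w i\<bar> = i" using sp_inj[OF w jS iS] by simp
      then show "w i = i \<or> w i = - i" by arith
    qed
    then show ?thesis using True unfolding st_def by auto
  next
    case False then show ?thesis by blast
  qed
qed

lemma ext_st_old:
  assumes w: "w \<in> signed_perms n" and i: "i \<in> {1..int n}"
  shows "st (ext n w s) i = st w i"
proof -
  have j: "\<bar>w i\<bar> \<in> {1..int n}" using sp_abs_range[OF w i] .
  have e1: "ext n w s i = w i" using i by (simp add: ext_def)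
  have e2: "ext n w s \<bar>w i\<bar> = w \<bar>w i\<bar>" using j by (simp add: ext_def)
  show ?thesis unfolding st_def e1 e2 ..
qed

lemma ext_st_new:
  assumes s: "s \<in> {1, -1}"
  shows "st (ext n w s) (int n + 1) = (if s = 1 then 2 else 1)"
  using s by (auto simp: st_def ext_def)

definition qq :: "(int \<Rightarrow> int) \<Rightarrow> int \<Rightarrow> int" where "qq w p = \<bar>w p\<bar>"

context
  fixes n :: nat and w :: "int \<Rightarrow> int" and p d :: int
  assumes w: "w \<in> signed_perms n" and p: "p \<in> {1..int n}" and d: "d \<in> {1, -1}"
begin

abbreviation "q0 \<equiv> qq w p"

lemma qq_in: "q0 \<in> {1..int n}" unfolding qq_def using sp_abs_range[OF w p] .

abbreviation "w' \<equiv> ins n w q0 d"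

lemma w'_apply: "w' i = (if i = q0 then d * (int n + 1) else if i = - q0 then - (d * (int n + 1))
     else if i = int n + 1 then w q0 else if i = - int n - 1 then - w q0 else w i)"
  using ins_apply[OF w qq_in d] .

lemma ins_st_other:
  assumes i: "i \<in> {1..int n}" "i \<noteq> p" "i \<noteq> q0"
  shows "st w' i = st w i"
proof -
  have q: "q0 \<in> {1..int n}" using qq_in .
  have j: "\<bar>w i\<bar> \<in> {1..int n}" using sp_abs_range[OF w i(1)] .
  have jq: "\<bar>w i\<bar> \<noteq> q0" using sp_abs_inj[OF w i(1) p] i(2) unfolding qq_def by blast
  have e1: "w' i = w i" using i q by (simp add: w'_apply)
  have e2: "w' \<bar>w i\<bar> = w \<bar>w i\<bar>" using j jq q by (simp add: w'_apply)
  show ?thesis unfolding st_def e1 e2 ..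
qed

lemma ins_st_distinct:
  assumes pq: "p \<noteq> q0"
  shows "st w' (int n + 1) = st w q0" "st w' q0 = (if d = 1 then 1 else 0)"
    "st w' p = (if d = 1 then 0 else 1)"
proof -
  have q: "q0 \<in> {1..int n}" using qq_in .
  have j: "\<bar>w q0\<bar> \<in> {1..int n}" using sp_abs_range[OF w q] .
  have jq: "\<bar>w q0\<bar> \<noteq> q0" using sp_abs_inj[OF w q p] pq unfolding qq_def by auto
  have wqr: "\<bar>w q0\<bar> \<le> int n" using j by simp
  have e1: "w' (int n + 1) = w q0" using q by (simp add: w'_apply)
  have e2: "w' \<bar>w q0\<bar> = w \<bar>w q0\<bar>" using j jq q by (simp add: w'_apply)
  have nq: "w q0 \<noteq> q0" using jq q by auto
  have nN: "w q0 \<noteq> int n + 1" using wqr by auto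
  show "st w' (int n + 1) = st w q0" unfolding st_def e1 using e2 nq nN by simp
  have e3: "w' q0 = d * (int n + 1)" by (simp add: w'_apply)
  have e4: "w' \<bar>d * (int n + 1)\<bar> = w q0" using d q by (auto simp: w'_apply)
  show "st w' q0 = (if d = 1 then 1 else 0)" unfolding st_def e3 e4 using d q wqr by auto
  have e5: "w' p = w p" using p q pq by (simp add: w'_apply)
  have wpr: "\<bar>w p\<bar> \<le> int n" using q unfolding qq_def by simp
  have np: "w p \<noteq> p" using pq p unfolding qq_def by auto
  show "st w' p = (if d = 1 then 0 else 1)" unfolding st_def e5 qq_def[symmetric] e3
    using d np wpr unfolding qq_def by auto
qed

lemma ins_st_same:
  assumes pq: "p = q0"
  shows "st w' q0 = (if d = 1 then 1 else 0)" "st w' (int n + 1) = (if d = 1 then 0 else 1)"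
proof -
  have q: "q0 \<in> {1..int n}" using qq_in .
  have wq: "\<bar>w q0\<bar> = q0" using pq unfolding qq_def by simp
  have e3: "w' q0 = d * (int n + 1)" by (simp add: w'_apply)
  have e4: "w' \<bar>d * (int n + 1)\<bar> = w q0" using d q by (auto simp: w'_apply)
  have wqr: "\<bar>w q0\<bar> \<le> int n" using wq q by simp
  show "st w' q0 = (if d = 1 then 1 else 0)" unfolding st_def e3 e4 using d q wqr by auto
  have e1: "w' (int n + 1) = w q0" using q by (simp add: w'_apply)
  show "st w' (int n + 1) = (if d = 1 then 0 else 1)" unfolding st_def e1 wq e3 using d q wqr by auto
qed

end


lemma cyc_orb: "cyc n w = card (orb (\<lambda>j. \<bar>w j\<bar>) ` {1..int n})"
  unfolding cyc_def orb_def ..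

lemma cyc_le: "cyc n w \<le> n"
  unfolding cyc_orb using card_image_le[of "{1..int n}" "orb (\<lambda>j. \<bar>w j\<bar>)"] by simp

lemma Suc_interval: "{1..int (Suc n)} = insert (int n + 1) {1..int n}"
  by auto

lemma cyc_ext:
  assumes w: "w \<in> signed_perms n" and s: "s \<in> {1, -1}"
  shows "cyc (Suc n) (ext n w s) = Suc (cyc n w)"
proof -
  have "card (orb (\<lambda>j. \<bar>ext n w s j\<bar>) ` insert (int n + 1) {1..int n}) = Suc (card (orb (\<lambda>j. \<bar>w j\<bar>) ` {1..int n}))"
  proof (rule card_orb_ext)
    show "\<forall>x\<in>{1..int n}. \<bar>w x\<bar> \<in> {1..int n}" using sp_abs_range[OF w] by blast
    show "\<bar>ext n w s (int n + 1)\<bar> = int n + 1" using s by (auto simp: ext_def)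
    show "\<forall>x\<in>{1..int n}. \<bar>ext n w s x\<bar> = \<bar>w x\<bar>" by (auto simp: ext_def)
  qed auto
  then show ?thesis unfolding cyc_orb Suc_interval .
qed

lemma cyc_ins:
  assumes w: "w \<in> signed_perms n" and q: "q \<in> {1..int n}" and d: "d \<in> {1, -1}"
  shows "cyc (Suc n) (ins n w q d) = cyc n w"
proof -
  have "card (orb (\<lambda>j. \<bar>ins n w q d j\<bar>) ` insert (int n + 1) {1..int n}) = card (orb (\<lambda>j. \<bar>w j\<bar>) ` {1..int n})"
  proof (rule card_orb_splice)
    show "\<forall>x\<in>{1..int n}. \<bar>w x\<bar> \<in> {1..int n}" using sp_abs_range[OF w] by blast
    show "inj_on (\<lambda>j. \<bar>w j\<bar>) {1..int n}" using sp_abs_inj[OF w] by (auto intro: inj_onI)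
    show "q \<in> {1..int n}" using q .
    show "\<bar>ins n w q d q\<bar> = int n + 1" using d by (auto simp: ins_apply[OF w q d])
    show "\<bar>ins n w q d (int n + 1)\<bar> = \<bar>w q\<bar>" using q by (auto simp: ins_apply[OF w q d])
    show "\<forall>x\<in>{1..int n} - {q}. \<bar>ins n w q d x\<bar> = \<bar>w x\<bar>" using q by (auto simp: ins_apply[OF w q d])
  qed auto
  then show ?thesis unfolding cyc_orb Suc_interval .
qed



lemma finite_sp: "finite (signed_perms m)"
proof -
  let ?I = "{- int m..int m}"
  have sub: "(\<lambda>f. restrict f ?I) ` signed_perms m \<subseteq> PiE ?I (\<lambda>_. ?I)"
  proof (rule image_subsetI)
    fix w assume w: "w \<in> signed_perms m"
    have "w i \<in> ?I" if i: "i \<in> ?I" for i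
    proof (cases "i = 0")
      case True then show ?thesis using sp_zero[OF w] by simp
    next
      case False
      then have "i \<in> SS m" using i by simp
      then have "w i \<in> SS m" by (rule spD(2)[OF w])
      then show ?thesis by simp
    qed
    then show "restrict w ?I \<in> PiE ?I (\<lambda>_. ?I)" by (simp add: PiE_iff)
  qed
  have inj: "inj_on (\<lambda>f. restrict f ?I) (signed_perms m)"
  proof (rule inj_onI)
    fix v w assume v: "v \<in> signed_perms m" and w: "w \<in> signed_perms m"
      and e: "restrict v ?I = restrict w ?I"
    show "v = w"
    proof
      fix i show "v i = w i"
      proof (cases "i \<in> ?I")
        case True then show ?thesis using fun_cong[OF e, of i] by simp
      next
        case False then show ?thesis using spD(4)[OF v] spD(4)[OF w] by simp
      qed
    qed
  qed
  show ?thesis using inj_on_finite[OF inj sub] finite_PiE[of ?I "\<lambda>_. ?I"] by simp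
qed

lemma sp_zero_set: "signed_perms 0 = {id}"
proof
  show "signed_perms 0 \<subseteq> {id}"
  proof
    fix w assume w: "w \<in> signed_perms 0"
    have "w i = i" for i
    proof (cases "i = 0")
      case True then show ?thesis using sp_zero[OF w] by simp
    next
      case False then show ?thesis using spD(4)[OF w, of i] by simp
    qed
    then show "w \<in> {id}" by auto
  qed
  have "id \<in> signed_perms 0" unfolding sp_iff by simp
  then show "{id} \<subseteq> signed_perms 0" by simp
qed

lemma card_insert_if': "finite A \<Longrightarrow> a \<notin> A \<Longrightarrow>
  card {i \<in> insert a A. P i} = (if P a then Suc (card {i \<in> A. P i}) else card {i \<in> A. P i})"
proof -
  assume f: "finite A" and a: "a \<notin> A"
  show ?thesis
  proof (cases "P a")
    case True
    then have "{i \<in> insert a A. P i} = insert a {i \<in> A. P i}" by auto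
    then show ?thesis using True f a by simp
  next
    case False
    then have "{i \<in> insert a A. P i} = {i \<in> A. P i}" by auto
    then show ?thesis using False by simp
  qed
qed

definition LL :: "'r \<Rightarrow> 'r \<Rightarrow> 'r \<Rightarrow> nat \<Rightarrow> 'r" where
  "LL X Y U c = (if c = 0 then X else if c = 1 then Y else U)"

lemma prod_LL:
  fixes X Y U :: "'r::comm_ring_1"
  assumes "finite A" "\<forall>i\<in>A. g i \<le> 2"
  shows "(\<Prod>i\<in>A. LL X Y U (g i)) =
    X ^ card {i \<in> A. g i = 0} * Y ^ card {i \<in> A. g i = 1} * U ^ card {i \<in> A. g i = 2}"
  using assms
proof (induction A rule: finite_induct)
  case empty then show ?case by simp
next
  case (insert a A)
  have IH: "(\<Prod>i\<in>A. LL X Y U (g i)) =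
    X ^ card {i \<in> A. g i = 0} * Y ^ card {i \<in> A. g i = 1} * U ^ card {i \<in> A. g i = 2}"
    using insert by simp
  have ga: "g a = 0 \<or> g a = 1 \<or> g a = 2" using insert.prems by auto
  show ?case
    unfolding prod.insert[OF insert.hyps] IH
      card_insert_if'[OF insert.hyps, of "\<lambda>i. g i = 0"]
      card_insert_if'[OF insert.hyps, of "\<lambda>i. g i = 1"]
      card_insert_if'[OF insert.hyps, of "\<lambda>i. g i = 2"]
    using ga by (auto simp: LL_def algebra_simps)
qed

lemma st_le: "st w i \<le> 2" unfolding st_def by auto

definition wt :: "'r::comm_ring_1 \<Rightarrow> 'r \<Rightarrow> 'r \<Rightarrow> 'r \<Rightarrow> nat \<Rightarrow> (int \<Rightarrow> int) \<Rightarrow> 'r" where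
  "wt X Y U K n w = (\<Prod>i\<in>{1..int n}. LL X Y U (st w i)) * K ^ (n - cyc n w)"

lemma wt_eq:
  assumes w: "w \<in> signed_perms n"
  shows "X ^ exc n w * Y ^ aexc n w * U ^ fixpts n w * K ^ (n - cyc n w) = wt X Y U K n w"
  unfolding wt_def prod_LL[OF finite_atLeastAtMost_int, where g = "st w", OF ballI[OF st_le]]
    exc_st fix_st aexc_st[OF w] by simp



lemma wt_ext:
  fixes X Y U K :: "'r::comm_ring_1"
  assumes w: "w \<in> signed_perms n" and s: "s \<in> {1, -1}"
  shows "wt X Y U K (Suc n) (ext n w s) = LL X Y U (if s = 1 then 2 else 1) * wt X Y U K n w"
proof -
  have N: "int n + 1 \<notin> {1..int n}" by simp
  have "(\<Prod>i\<in>{1..int (Suc n)}. LL X Y U (st (ext n w s) i))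
      = LL X Y U (st (ext n w s) (int n + 1)) * (\<Prod>i\<in>{1..int n}. LL X Y U (st (ext n w s) i))"
    unfolding Suc_interval by (rule prod.insert[OF finite_atLeastAtMost_int N])
  also have "(\<Prod>i\<in>{1..int n}. LL X Y U (st (ext n w s) i)) = (\<Prod>i\<in>{1..int n}. LL X Y U (st w i))"
    by (rule prod.cong[OF refl]) (simp add: ext_st_old[OF w])
  also have "st (ext n w s) (int n + 1) = (if s = 1 then 2 else 1)" using ext_st_new[OF s] .
  finally have P: "(\<Prod>i\<in>{1..int (Suc n)}. LL X Y U (st (ext n w s) i))
      = LL X Y U (if s = 1 then 2 else 1) * (\<Prod>i\<in>{1..int n}. LL X Y U (st w i))" .
  have C: "Suc n - cyc (Suc n) (ext n w s) = n - cyc n w" using cyc_ext[OF w s] by simp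
  show ?thesis unfolding wt_def P C by (simp add: algebra_simps)
qed

lemma LL_pair: "d \<in> {1, -1::int} \<Longrightarrow>
  LL X Y U (if d = 1 then 0 else 1) * LL X Y U (if d = 1 then 1 else 0) = X * (Y::'r::comm_ring_1)"
  by (auto simp: LL_def algebra_simps)

lemma wt_ins:
  fixes X Y U K :: "'r::comm_ring_1"
  assumes w: "w \<in> signed_perms n" and p: "p \<in> {1..int n}" and d: "d \<in> {1, -1}"
  shows "wt X Y U K (Suc n) (ins n w (qq w p) d)
    = (X * Y * K) * (\<Prod>i\<in>{1..int n} - {p}. LL X Y U (st w i)) * K ^ (n - cyc n w)"
proof -
  define q where "q = qq w p"
  define v where "v = ins n w q d"
  have q: "q \<in> {1..int n}" unfolding q_def using qq_in[OF w p d] .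
  have N: "int n + 1 \<notin> {1..int n}" by simp
  let ?L = "LL X Y U"
  have fin: "finite ({1..int n} - {p})" by simp
  have P1: "(\<Prod>i\<in>{1..int (Suc n)}. ?L (st v i))
      = ?L (st v (int n + 1)) * (\<Prod>i\<in>{1..int n}. ?L (st v i))"
    unfolding Suc_interval by (rule prod.insert[OF finite_atLeastAtMost_int N])
  have P2: "(\<Prod>i\<in>{1..int n}. ?L (st v i)) = ?L (st v p) * (\<Prod>i\<in>{1..int n} - {p}. ?L (st v i))"
    by (rule prod.remove[OF finite_atLeastAtMost_int p])
  have main: "(\<Prod>i\<in>{1..int (Suc n)}. ?L (st v i)) = (X * Y) * (\<Prod>i\<in>{1..int n} - {p}. ?L (st w i))"
  proof (cases "p = q")
    case True
    have o: "(\<Prod>i\<in>{1..int n} - {p}. ?L (st v i)) = (\<Prod>i\<in>{1..int n} - {p}. ?L (st w i))"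
    proof (rule prod.cong[OF refl])
      fix i assume i: "i \<in> {1..int n} - {p}"
      have "st v i = st w i" unfolding v_def q_def
      proof (rule ins_st_other[OF w p d])
        show "i \<in> {1..int n}" "i \<noteq> p" using i by auto
        have "qq w p = q" by (simp add: q_def)
        then show "i \<noteq> qq w p" using i True by simp
      qed
      then show "?L (st v i) = ?L (st w i)" by simp
    qed
    have a: "st v p = (if d = 1 then 1 else 0)" "st v (int n + 1) = (if d = 1 then 0 else 1)"
      using ins_st_same[OF w p d] True unfolding v_def q_def by auto
    show ?thesis unfolding P1 P2 o a using d by (auto simp: LL_def algebra_simps)
  next
    case False
    have qp: "q \<in> {1..int n} - {p}" using q False by simp
    have P3: "(\<Prod>i\<in>{1..int n} - {p}. ?L (st v i)) = ?L (st v q) * (\<Prod>i\<in>{1..int n} - {p} - {q}. ?L (st v i))"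
      by (rule prod.remove[OF fin qp])
    have P4: "(\<Prod>i\<in>{1..int n} - {p}. ?L (st w i)) = ?L (st w q) * (\<Prod>i\<in>{1..int n} - {p} - {q}. ?L (st w i))"
      by (rule prod.remove[OF fin qp])
    have o: "(\<Prod>i\<in>{1..int n} - {p} - {q}. ?L (st v i)) = (\<Prod>i\<in>{1..int n} - {p} - {q}. ?L (st w i))"
    proof (rule prod.cong[OF refl])
      fix i assume i: "i \<in> {1..int n} - {p} - {q}"
      have "st v i = st w i" unfolding v_def q_def
      proof (rule ins_st_other[OF w p d])
        show "i \<in> {1..int n}" "i \<noteq> p" using i by auto
        have "qq w p = q" by (simp add: q_def)
        then show "i \<noteq> qq w p" using i by simp
      qed
      then show "?L (st v i) = ?L (st w i)" by simp
    qed
    have a: "st v (int n + 1) = st w q" "st v q = (if d = 1 then 1 else 0)" "st v p = (if d = 1 then 0 else 1)"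
      using ins_st_distinct[OF w p d] False unfolding v_def q_def by auto
    show ?thesis unfolding P1 P2 P3 P4 o a using d by (auto simp: LL_def algebra_simps)
  qed
  have C: "Suc n - cyc (Suc n) v = Suc (n - cyc n w)"
    using cyc_ins[OF w q d] cyc_le[of n w] unfolding v_def by simp
  show ?thesis unfolding wt_def q_def[symmetric] v_def[symmetric] main C by (simp add: algebra_simps)
qed


lemma qq_eq: "qq w p = \<bar>w p\<bar>" by (simp add: qq_def)

lemma qq_bij:
  assumes w: "w \<in> signed_perms n"
  shows "bij_betw (qq w) {1..int n} {1..int n}"
proof -
  have inj: "inj_on (qq w) {1..int n}"
    by (rule inj_onI) (use sp_abs_inj[OF w] in \<open>simp add: qq_eq\<close>)
  have sub: "qq w ` {1..int n} \<subseteq> {1..int n}"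
    by (rule image_subsetI) (unfold qq_eq, rule sp_abs_range[OF w])
  show ?thesis unfolding bij_betw_def using inj endo_inj_surj[OF finite_atLeastAtMost_int sub inj] by simp
qed

lemma sum_prod3:
  "(\<Sum>x\<in>A \<times> (B \<times> C). h x) = (\<Sum>a\<in>A. \<Sum>b\<in>B. \<Sum>c\<in>C. h (a, b, c))"
proof -
  have "(\<Sum>x\<in>A \<times> (B \<times> C). h x) = (\<Sum>a\<in>A. \<Sum>y\<in>B \<times> C. h (a, y))"
    using sum.cartesian_product[of "\<lambda>a y. h (a, y)" "B \<times> C" A] by (simp add: case_prod_eta)
  also have "\<dots> = (\<Sum>a\<in>A. \<Sum>b\<in>B. \<Sum>c\<in>C. h (a, b, c))"
  proof (rule sum.cong[OF refl])
    fix a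
    show "(\<Sum>y\<in>B \<times> C. h (a, y)) = (\<Sum>b\<in>B. \<Sum>c\<in>C. h (a, b, c))"
      using sum.cartesian_product[of "\<lambda>b c. h (a, b, c)" C B] by (simp add: case_prod_eta)
  qed
  finally show ?thesis .
qed

lemma PP_rec:
  fixes X Y U K :: "'r::comm_ring_1"
  shows "(\<Sum>w\<in>signed_perms (Suc n). wt X Y U K (Suc n) w)
    = (U + Y) * (\<Sum>w\<in>signed_perms n. wt X Y U K n w)
      + (\<Sum>w\<in>signed_perms n. \<Sum>p\<in>{1..int n}.
          (2 * (X * Y * K)) * (\<Prod>i\<in>{1..int n} - {p}. LL X Y U (st w i)) * K ^ (n - cyc n w))"
proof -
  let ?B = "signed_perms (Suc n)"
  let ?N = "int n + 1"
  let ?f = "wt X Y U K (Suc n)"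
  define S1 where "S1 = {w \<in> ?B. w ?N = 1 * ?N}"
  define S2 where "S2 = {w \<in> ?B. w ?N = (-1) * ?N}"
  define S3 where "S3 = Ins n"
  have fin: "finite ?B" by (rule finite_sp)
  have f1: "finite S1" "finite S2" "finite S3" unfolding S1_def S2_def S3_def using fin by auto
  have Beq: "?B = S1 \<union> (S2 \<union> S3)" unfolding S1_def S2_def S3_def by auto
  have d1: "S1 \<inter> (S2 \<union> S3) = {}" unfolding S1_def S2_def S3_def by auto
  have d2: "S2 \<inter> S3 = {}" unfolding S2_def S3_def by auto
  have split: "sum ?f ?B = sum ?f S1 + (sum ?f S2 + sum ?f S3)"
    unfolding Beq using f1 d1 d2 by (simp add: sum.union_disjoint)
  have s1: "sum ?f S1 = U * (\<Sum>w\<in>signed_perms n. wt X Y U K n w)"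
  proof -
    have "sum ?f S1 = (\<Sum>w\<in>signed_perms n. ?f (ext n w 1))"
      unfolding S1_def by (rule sum.reindex_bij_betw[OF ext_bij, symmetric]) simp
    also have "\<dots> = (\<Sum>w\<in>signed_perms n. U * wt X Y U K n w)"
      by (rule sum.cong[OF refl]) (simp add: wt_ext LL_def)
    finally show ?thesis by (simp add: sum_distrib_left)
  qed
  have s2: "sum ?f S2 = Y * (\<Sum>w\<in>signed_perms n. wt X Y U K n w)"
  proof -
    have "sum ?f S2 = (\<Sum>w\<in>signed_perms n. ?f (ext n w (-1)))"
      unfolding S2_def by (rule sum.reindex_bij_betw[OF ext_bij, symmetric]) simp
    also have "\<dots> = (\<Sum>w\<in>signed_perms n. Y * wt X Y U K n w)"
      by (rule sum.cong[OF refl]) (simp add: wt_ext LL_def)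
    finally show ?thesis by (simp add: sum_distrib_left)
  qed
  have s3: "sum ?f S3 = (\<Sum>w\<in>signed_perms n. \<Sum>p\<in>{1..int n}.
          (2 * (X * Y * K)) * (\<Prod>i\<in>{1..int n} - {p}. LL X Y U (st w i)) * K ^ (n - cyc n w))"
  proof -
    have "sum ?f S3 = (\<Sum>x\<in>signed_perms n \<times> ({1..int n} \<times> {1, -1}). ?f ((\<lambda>(w, q, d). ins n w q d) x))"
      unfolding S3_def by (rule sum.reindex_bij_betw[OF ins_bij, symmetric])
    also have "\<dots> = (\<Sum>w\<in>signed_perms n. \<Sum>q\<in>{1..int n}. \<Sum>d\<in>{1, -1}. ?f (ins n w q d))"
      unfolding sum_prod3 by simp
    also have "\<dots> = (\<Sum>w\<in>signed_perms n. \<Sum>p\<in>{1..int n}.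
          (2 * (X * Y * K)) * (\<Prod>i\<in>{1..int n} - {p}. LL X Y U (st w i)) * K ^ (n - cyc n w))"
    proof (rule sum.cong[OF refl])
      fix w assume w: "w \<in> signed_perms n"
      have "(\<Sum>q\<in>{1..int n}. \<Sum>d\<in>{1, -1}. ?f (ins n w q d))
          = (\<Sum>p\<in>{1..int n}. \<Sum>d\<in>{1, -1}. ?f (ins n w (qq w p) d))"
        by (rule sum.reindex_bij_betw[OF qq_bij[OF w], symmetric])
      also have "\<dots> = (\<Sum>p\<in>{1..int n}.
          (2 * (X * Y * K)) * (\<Prod>i\<in>{1..int n} - {p}. LL X Y U (st w i)) * K ^ (n - cyc n w))"
      proof (rule sum.cong[OF refl])
        fix p assume p: "p \<in> {1..int n}"
        let ?c = "(X * Y * K) * (\<Prod>i\<in>{1..int n} - {p}. LL X Y U (st w i)) * K ^ (n - cyc n w)"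
        have "(\<Sum>d\<in>{1, -1}. ?f (ins n w (qq w p) d)) = (\<Sum>d\<in>{1, -1::int}. ?c)"
          by (rule sum.cong[OF refl]) (rule wt_ins[OF w p], simp)
        also have "\<dots> = 2 * ?c" by simp
        finally show "(\<Sum>d\<in>{1, -1}. ?f (ins n w (qq w p) d)) =
          (2 * (X * Y * K)) * (\<Prod>i\<in>{1..int n} - {p}. LL X Y U (st w i)) * K ^ (n - cyc n w)"
          by (simp add: algebra_simps)
      qed
      finally show "(\<Sum>q\<in>{1..int n}. \<Sum>d\<in>{1, -1}. ?f (ins n w q d)) = (\<Sum>p\<in>{1..int n}.
          (2 * (X * Y * K)) * (\<Prod>i\<in>{1..int n} - {p}. LL X Y U (st w i)) * K ^ (n - cyc n w))" .
    qed
    finally show ?thesis .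
  qed
  show ?thesis using split s1 s2 s3 by (simp add: algebra_simps)
qed



lemma der_basic:
  fixes D :: "'r::comm_ring_1 \<Rightarrow> 'r"
  assumes add: "\<And>a b. D (a + b) = D a + D b" and mult: "\<And>a b. D (a * b) = D a * b + a * D b"
  shows "D 0 = 0" "D 1 = 0"
proof -
  have "D 0 = D 0 + D 0" using add[of 0 0] by simp
  then show "D 0 = 0" by simp
  have "D 1 = D 1 + D 1" using mult[of 1 1] by simp
  then show "D 1 = 0" by simp
qed

lemma der_sum:
  fixes D :: "'r::comm_ring_1 \<Rightarrow> 'r"
  assumes add: "\<And>a b. D (a + b) = D a + D b" and mult: "\<And>a b. D (a * b) = D a * b + a * D b"
  shows "D (sum f A) = (\<Sum>x\<in>A. D (f x))"
proof (cases "finite A")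
  case True
  then show ?thesis
  proof (induction A rule: finite_induct)
    case empty then show ?case using der_basic[OF add mult] by simp
  next
    case (insert a A) then show ?case by (simp add: add)
  qed
next
  case False then show ?thesis using der_basic[OF add mult] by simp
qed

lemma der_prod:
  fixes D :: "'r::comm_ring_1 \<Rightarrow> 'r"
  assumes add: "\<And>a b. D (a + b) = D a + D b" and mult: "\<And>a b. D (a * b) = D a * b + a * D b"
    and fin: "finite A"
  shows "D (prod f A) = (\<Sum>j\<in>A. D (f j) * prod f (A - {j}))"
  using fin
proof (induction A rule: finite_induct)
  case empty then show ?case using der_basic[OF add mult] by simp
next
  case (insert a A)
  have e1: "insert a A - {a} = A" using insert.hyps by auto
  have e2: "(\<Sum>j\<in>A. D (f j) * prod f (insert a A - {j})) = f a * (\<Sum>j\<in>A. D (f j) * prod f (A - {j}))"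
  proof -
    have "(\<Sum>j\<in>A. D (f j) * prod f (insert a A - {j})) = (\<Sum>j\<in>A. f a * (D (f j) * prod f (A - {j})))"
    proof (rule sum.cong[OF refl])
      fix j assume j: "j \<in> A"
      have "insert a A - {j} = insert a (A - {j})" using j insert.hyps by auto
      then have "prod f (insert a A - {j}) = f a * prod f (A - {j})" using insert.hyps by simp
      then show "D (f j) * prod f (insert a A - {j}) = f a * (D (f j) * prod f (A - {j}))" by (simp add: algebra_simps)
    qed
    then show ?thesis by (simp add: sum_distrib_left)
  qed
  have "D (prod f (insert a A)) = D (f a) * prod f A + f a * D (prod f A)"
    using insert.hyps by (simp add: mult)
  also have "\<dots> = D (f a) * prod f (insert a A - {a}) + (\<Sum>j\<in>A. D (f j) * prod f (insert a A - {j}))"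
    unfolding e1 e2 insert.IH ..
  also have "\<dots> = (\<Sum>j\<in>insert a A. D (f j) * prod f (insert a A - {j}))"
    using insert.hyps by simp
  finally show ?case .
qed

lemma der_pow:
  fixes D :: "'r::comm_ring_1 \<Rightarrow> 'r"
  assumes add: "\<And>a b. D (a + b) = D a + D b" and mult: "\<And>a b. D (a * b) = D a * b + a * D b"
    and c: "D c = 0"
  shows "D (c ^ e) = 0"
proof (induction e)
  case 0 then show ?case using der_basic[OF add mult] by simp
next
  case (Suc e) then show ?case by (simp add: mult c)
qed

lemma der_wt:
  fixes D :: "'r::comm_ring_1 \<Rightarrow> 'r"
  assumes add: "\<And>a b. D (a + b) = D a + D b" and mult: "\<And>a b. D (a * b) = D a * b + a * D b"
    and K: "D K = 0" and L: "\<And>c. D (LL X Y U c) = 2 * K * X * Y"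
  shows "D (wt X Y U K n w) = (\<Sum>p\<in>{1..int n}.
          (2 * (X * Y * K)) * (\<Prod>i\<in>{1..int n} - {p}. LL X Y U (st w i)) * K ^ (n - cyc n w))"
proof -
  have "D (wt X Y U K n w) = D (\<Prod>i\<in>{1..int n}. LL X Y U (st w i)) * K ^ (n - cyc n w)"
    unfolding wt_def by (simp add: mult der_pow[OF add mult K])
  also have "D (\<Prod>i\<in>{1..int n}. LL X Y U (st w i))
     = (\<Sum>p\<in>{1..int n}. (2 * K * X * Y) * (\<Prod>i\<in>{1..int n} - {p}. LL X Y U (st w i)))"
    by (simp add: der_prod[OF add mult finite_atLeastAtMost_int] L)
  finally show ?thesis by (simp add: sum_distrib_left sum_distrib_right mult_ac)
qed


theorem lemma11:
  fixes D :: "'a::comm_ring_1 mpoly4 \<Rightarrow> 'a mpoly4" and k :: 'a and n :: nat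
  assumes "is_derivation D"
    and "D (Var VI) = Var VI * (Var VY + Var VU)"
    and "D (Var VX) = 2 * Const k * Var VX * Var VY"
    and "D (Var VY) = 2 * Const k * Var VX * Var VY"
    and "D (Var VU) = 2 * Const k * Var VX * Var VY"
    and "n \<ge> 1"
  shows "(D ^^ n) (Var VI) = Var VI *
    (\<Sum>w\<in>signed_perms n. Var VX ^ exc n w * Var VY ^ aexc n w * Var VU ^ fixpts n w
                           * Const k ^ (n - cyc n w))"
proof -
  let ?I = "Var VI :: 'a mpoly4" and ?X = "Var VX :: 'a mpoly4" and ?Y = "Var VY :: 'a mpoly4"
    and ?U = "Var VU :: 'a mpoly4" and ?K = "Const k :: 'a mpoly4"
  have add: "\<And>a b. D (a + b) = D a + D b" and mult: "\<And>a b. D (a * b) = D a * b + a * D b"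
    and cst: "\<And>c. D (Const c) = 0"
    using assms(1) unfolding is_derivation_def by blast+
  have DK: "D ?K = 0" by (rule cst)
  have DL: "D (LL ?X ?Y ?U c) = 2 * ?K * ?X * ?Y" for c
    using assms(3-5) by (simp add: LL_def)
  define PP where "PP m = (\<Sum>w\<in>signed_perms m. wt ?X ?Y ?U ?K m w)" for m
  have main: "(D ^^ m) ?I = ?I * PP m" for m
  proof (induction m)
    case 0
    have "PP 0 = 1" unfolding PP_def sp_zero_set wt_def by simp
    then show ?case by simp
  next
    case (Suc m)
    have dP: "D (PP m) = (\<Sum>w\<in>signed_perms m. \<Sum>p\<in>{1..int m}.
          (2 * (?X * ?Y * ?K)) * (\<Prod>i\<in>{1..int m} - {p}. LL ?X ?Y ?U (st w i)) * ?K ^ (m - cyc m w))"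
      unfolding PP_def der_sum[OF add mult] der_wt[OF add mult DK DL] ..
    have rec: "PP (Suc m) = (?U + ?Y) * PP m + (\<Sum>w\<in>signed_perms m. \<Sum>p\<in>{1..int m}.
          (2 * (?X * ?Y * ?K)) * (\<Prod>i\<in>{1..int m} - {p}. LL ?X ?Y ?U (st w i)) * ?K ^ (m - cyc m w))"
      unfolding PP_def by (rule PP_rec)
    have "(D ^^ Suc m) ?I = D (?I * PP m)" using Suc.IH by simp
    also have "\<dots> = D ?I * PP m + ?I * D (PP m)" by (rule mult)
    also have "\<dots> = ?I * PP (Suc m)"
      unfolding dP assms(2) rec by (simp add: algebra_simps)
    finally show ?case .
  qed
  have "(\<Sum>w\<in>signed_perms n. ?X ^ exc n w * ?Y ^ aexc n w * ?U ^ fixpts n w * ?K ^ (n - cyc n w)) = PP n"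
    unfolding PP_def by (rule sum.cong[OF refl]) (rule wt_eq)
  then show ?thesis using main[of n] by simp
qed


end
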